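(* Let $\alpha_1,\alpha_2,\alpha_3,\beta_1,\beta_2,\beta_3,\beta_4,\gamma_1,\gamma_2,\gamma_3,\gamma_4$ be positive real constants, and set $A_1=\alpha_1+\alpha_2+\alpha_3$, $A_2=\beta_1-\beta_4$, $A_3=\gamma_1-\gamma_4$. Consider the system, on the simplex $\{(x_0,x_1,x_2): x_i\ge 0,\ x_0+x_1+x_2=1\}$, $$\frac{dx_0}{dt}=\alpha_1x_0+\beta_2x_1+\gamma_2x_2-x_0(A_1x_0+A_2x_1+A_3x_2),$$ $$\frac{dx_1}{dt}=\alpha_2x_0+(\beta_1-\beta_2-\beta_3-\beta_4)x_1+\gamma_3x_2-x_1(A_1x_0+A_2x_1+A_3x_2),$$ $$\frac{dx_2}{dt}=\alpha_3x_0+\beta_3x_1+(\gamma_1-\gamma_2-\gamma_3-\gamma_4)x_2-x_2(A_1x_0+A_2x_1+A_3x_2).$$ Then this system has a unique fixed point with all coordinates positive, and this fixed point is stable.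
   Context: This is the "reversible model" for the proportions $x_0,x_1,x_2$ of three cancer cell phenotypes CSC$_0$, NSCC$_1$, NSCC$_2$, obtained by normalizing the linear system $dX/dt=QX$ for cell numbers $X=(X_0,X_1,X_2)$, $x_i=X_i/(X_0+X_1+X_2)$, where $$Q=\begin{pmatrix}\alpha_1&\beta_2&\gamma_2\\ \alpha_2&\beta_1-\beta_2-\beta_3-\beta_4&\gamma_3\\ \alpha_3&\beta_3&\gamma_1-\gamma_2-\gamma_3-\gamma_4\end{pmatrix}.$$ Parameters: $\alpha_1$ CSC symmetric division, $\alpha_2,\alpha_3$ asymmetric CSC division into NSCC$_1$, NSCC$_2$; $\beta_1,\gamma_1$ NSCC divisions; $\beta_2,\gamma_2$ de-differentiation to CSC; $\beta_3,\gamma_3$ interconversion between NSCC$_1$ and NSCC$_2$; $\beta_4,\gamma_4$ death rates. *)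

theory Defs
  imports "HOL-Analysis.Analysis"
begin

definition rev_rhs ::
  "real \<Rightarrow> real \<Rightarrow> real \<Rightarrow> real \<Rightarrow> real \<Rightarrow> real \<Rightarrow> real \<Rightarrow> real \<Rightarrow> real \<Rightarrow> real \<Rightarrow> real
   \<Rightarrow> real \<times> real \<times> real \<Rightarrow> real \<times> real \<times> real" where
  "rev_rhs a1 a2 a3 b1 b2 b3 b4 g1 g2 g3 g4 = (\<lambda>(x0, x1, x2).
     (let A1 = a1 + a2 + a3; A2 = b1 - b4; A3 = g1 - g4;
          S = A1 * x0 + A2 * x1 + A3 * x2
      in (a1 * x0 + b2 * x1 + g2 * x2 - x0 * S,
          a2 * x0 + (b1 - b2 - b3 - b4) * x1 + g3 * x2 - x1 * S,
          a3 * x0 + b3 * x1 + (g1 - g2 - g3 - g4) * x2 - x2 * S)))"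

definition simplex3 :: "(real \<times> real \<times> real) set" where
  "simplex3 = {(x0, x1, x2). x0 \<ge> 0 \<and> x1 \<ge> 0 \<and> x2 \<ge> 0 \<and> x0 + x1 + x2 = 1}"

definition is_solution :: "('a::real_normed_vector \<Rightarrow> 'a) \<Rightarrow> (real \<Rightarrow> 'a) \<Rightarrow> bool" where
  "is_solution F x \<longleftrightarrow> (\<forall>t\<ge>0. (x has_vector_derivative F (x t)) (at t within {0..}))"

definition lyapunov_stable :: "('a::real_normed_vector \<Rightarrow> 'a) \<Rightarrow> 'a set \<Rightarrow> 'a \<Rightarrow> bool" where
  "lyapunov_stable F S p \<longleftrightarrow>
     (\<forall>\<epsilon>>0. \<exists>\<delta>>0. \<forall>x. is_solution F x \<and> x 0 \<in> S \<and> dist (x 0) p < \<delta>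
        \<longrightarrow> (\<forall>t\<ge>0. dist (x t) p < \<epsilon>))"

end

theory Submission
  imports Defs
begin

lemma simplex3_compact: "compact simplex3"
proof -
  have "simplex3 = {x. fst x \<ge> 0} \<inter> {x. fst (snd x) \<ge> 0} \<inter> {x. snd (snd x) \<ge> 0}
     \<inter> {x. fst x + fst (snd x) + snd (snd x) = (1::real)}"
    by (auto simp: simplex3_def)
  moreover have "closed \<dots>"
    by (intro closed_Int closed_Collect_le closed_Collect_eq continuous_intros)
  moreover have "bounded simplex3"
    unfolding bounded_iff
  proof (intro exI ballI)
    fix x assume "x \<in> simplex3"
    then obtain a b c where x: "x = (a,b,c)" "a\<ge>0" "b\<ge>0" "c\<ge>0" "a+b+c=1"
      by (auto simp: simplex3_def)
    have "norm x \<le> norm a + norm (b,c)" using x norm_Pair_le[of a "(b,c)"] by simp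
    also have "\<dots> \<le> norm a + (norm b + norm c)" using norm_Pair_le[of b c] by simp
    also have "\<dots> = 1" using x by simp
    finally show "norm x \<le> 1" .
  qed
  ultimately show ?thesis by (simp add: compact_eq_bounded_closed)
qed

lemma simplex3_convex: "convex simplex3"
  unfolding convex_def
proof (intro ballI allI impI)
  fix x y :: "real \<times> real \<times> real" and u v :: real
  assume xy: "x \<in> simplex3" "y \<in> simplex3" and uv: "0 \<le> u" "0 \<le> v" "u + v = 1"
  obtain a b c where x: "x = (a,b,c)" by (cases x) auto
  obtain a' b' c' where y: "y = (a',b',c')" by (cases y) auto
  have h: "0 \<le> a" "0 \<le> b" "0 \<le> c" "a + b + c = 1" "0 \<le> a'" "0 \<le> b'" "0 \<le> c'" "a' + b' + c' = 1"
    using xy by (auto simp: x y simplex3_def)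
  have "u * a + v * a' + (u * b + v * b') + (u * c + v * c') = u * (a+b+c) + v * (a'+b'+c')"
    by (simp add: algebra_simps)
  then show "u *\<^sub>R x + v *\<^sub>R y \<in> simplex3"
    using h uv by (simp add: x y simplex3_def)
qed

lemma perron3:
  fixes a b c d e f g h k :: real
  assumes pos: "b>0" "c>0" "d>0" "f>0" "g>0" "h>0"
  shows "\<exists>z0 z1 z2 l. z0>0 \<and> z1>0 \<and> z2>0 \<and> a * z0+b * z1+c * z2 = l * z0
          \<and> d * z0+e * z1+f * z2 = l * z1 \<and> g * z0+h * z1+k * z2 = l * z2"
proof -
  define C where "C = \<bar>a\<bar>+\<bar>e\<bar>+\<bar>k\<bar>+1"
  define r where "r = min (min (min b c) (min d f)) (min (min g h) 1)"
  have r: "r > 0" "r \<le> b" "r \<le> c" "r \<le> d" "r \<le> f" "r \<le> g" "r \<le> h" "r \<le> 1"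
    using pos by (auto simp: r_def)
  have rC: "r \<le> a + C" "r \<le> e + C" "r \<le> k + C" using r by (auto simp: C_def)
  define Y0 where "Y0 = (\<lambda>x::real\<times>real\<times>real. (a+C) * fst x + b * fst (snd x) + c * snd (snd x))"
  define Y1 where "Y1 = (\<lambda>x::real\<times>real\<times>real. d * fst x + (e+C) * fst (snd x) + f * snd (snd x))"
  define Y2 where "Y2 = (\<lambda>x::real\<times>real\<times>real. g * fst x + h * fst (snd x) + (k+C) * snd (snd x))"
  define \<Phi> where "\<Phi> = (\<lambda>x. (Y0 x / (Y0 x + Y1 x + Y2 x), Y1 x / (Y0 x + Y1 x + Y2 x),
         Y2 x / (Y0 x + Y1 x + Y2 x)))"
  have Ylow: "Y0 x \<ge> r \<and> Y1 x \<ge> r \<and> Y2 x \<ge> r" if xs: "x \<in> simplex3" for x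
  proof -
    obtain x0 x1 x2 where x: "x = (x0,x1,x2)" "x0\<ge>0" "x1\<ge>0" "x2\<ge>0" "x0+x1+x2=1"
      using xs by (cases x) (auto simp: simplex3_def)
    have "Y0 x \<ge> r * x0 + r * x1 + r * x2" unfolding Y0_def x(1) fst_conv snd_conv
      by (intro add_mono mult_right_mono) (use x rC r in auto)
    moreover have "Y1 x \<ge> r * x0 + r * x1 + r * x2" unfolding Y1_def x(1) fst_conv snd_conv
      by (intro add_mono mult_right_mono) (use x rC r in auto)
    moreover have "Y2 x \<ge> r * x0 + r * x1 + r * x2" unfolding Y2_def x(1) fst_conv snd_conv
      by (intro add_mono mult_right_mono) (use x rC r in auto)
    moreover have "r * x0 + r * x1 + r * x2 = r" using x(5) by (metis distrib_left mult.right_neutral)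
    ultimately show ?thesis by simp
  qed
  have "continuous_on simplex3 \<Phi>"
    unfolding \<Phi>_def Y0_def Y1_def Y2_def
    by (intro continuous_intros) (use Ylow r in \<open>fastforce simp: Y0_def Y1_def Y2_def\<close>)+
  moreover have "\<Phi> \<in> simplex3 \<rightarrow> simplex3"
  proof
    fix x assume "x \<in> simplex3"
    with Ylow[OF this] r have "Y0 x + Y1 x + Y2 x > 0" "Y0 x \<ge> 0" "Y1 x \<ge> 0" "Y2 x \<ge> 0" by auto
    then show "\<Phi> x \<in> simplex3" unfolding \<Phi>_def simplex3_def
      by (auto simp: add_divide_distrib[symmetric])
  qed
  moreover have "(1,0,0) \<in> simplex3" by (simp add: simplex3_def)
  then have "simplex3 \<noteq> {}" by auto
  ultimately obtain x where x: "x \<in> simplex3" "\<Phi> x = x"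
    using brouwer[OF simplex3_compact simplex3_convex] by blast
  define \<sigma> where "\<sigma> = Y0 x + Y1 x + Y2 x"
  have \<sigma>: "\<sigma> > 0" using Ylow[OF x(1)] r by (auto simp: \<sigma>_def)
  obtain x0 x1 x2 where xx: "x = (x0,x1,x2)" by (cases x) auto
  have d: "Y0 x / \<sigma> = x0" "Y1 x / \<sigma> = x1" "Y2 x / \<sigma> = x2"
    using x(2) unfolding \<Phi>_def \<sigma>_def xx by (simp_all add: prod_eq_iff)
  have e0: "Y0 x = \<sigma> * x0" and e1: "Y1 x = \<sigma> * x1" and e2: "Y2 x = \<sigma> * x2"
    using d \<sigma> by (auto simp: field_simps)
  have "\<sigma> * x0 > 0" "\<sigma> * x1 > 0" "\<sigma> * x2 > 0"
    using e0 e1 e2 Ylow[OF x(1)] r(1) by auto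
  then have pos0: "x0 > 0" "x1 > 0" "x2 > 0"
    using \<sigma> by (simp_all add: zero_less_mult_iff)
  show ?thesis
    apply (rule exI[of _ x0], rule exI[of _ x1], rule exI[of _ x2], rule exI[of _ "\<sigma> - C"])
    using pos0 e0 e1 e2 unfolding Y0_def Y1_def Y2_def xx by (auto simp: algebra_simps)
qed


lemma aux_le: fixes x y u v :: real assumes "x - y = 2 * (u - v)" "v \<le> u" shows "y \<le> x" using assms by (smt (verit))

lemma nonincr:
  fixes f f' :: "real \<Rightarrow> real"
  assumes T: "0 \<le> T"
    and d: "\<And>t. 0 \<le> t \<Longrightarrow> t \<le> T \<Longrightarrow> (f has_real_derivative f' t) (at t within {0..T})"
    and n: "\<And>t. 0 \<le> t \<Longrightarrow> t \<le> T \<Longrightarrow> f' t \<le> 0"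
  shows "f T \<le> f 0"
proof (rule DERIV_nonpos_imp_decreasing_open[OF T])
  fix t :: real assume t: "0 < t" "t < T"
  then have "(f has_real_derivative f' t) (at t)" using d[of t] at_within_Icc_at[of 0 t T] by auto
  then show "\<exists>y. (f has_real_derivative y) (at t) \<and> y \<le> 0" using n[of t] t by auto
next
  show "continuous_on {0..T} f" by (rule DERIV_continuous_on[of _ _ f']) (use d in auto)
qed

locale M3 =
  fixes q00 q01 q02 q10 q11 q12 q20 q21 q22 :: real
  assumes offpos: "q01 > 0" "q02 > 0" "q10 > 0" "q12 > 0" "q20 > 0" "q21 > 0"
begin

definition SS :: "real \<Rightarrow> real \<Rightarrow> real \<Rightarrow> real" where
  "SS x0 x1 x2 = (q00 + q10 + q20) * x0 + (q01 + q11 + q21) * x1 + (q02 + q12 + q22) * x2"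

definition F0 where "F0 x0 x1 x2 = q00 * x0 + q01 * x1 + q02 * x2 - x0 * SS x0 x1 x2"
definition F1 where "F1 x0 x1 x2 = q10 * x0 + q11 * x1 + q12 * x2 - x1 * SS x0 x1 x2"
definition F2 where "F2 x0 x1 x2 = q20 * x0 + q21 * x1 + q22 * x2 - x2 * SS x0 x1 x2"

definition FF :: "real \<times> real \<times> real \<Rightarrow> real \<times> real \<times> real" where
  "FF x = (F0 (fst x) (fst (snd x)) (snd (snd x)), F1 (fst x) (fst (snd x)) (snd (snd x)),
           F2 (fst x) (fst (snd x)) (snd (snd x)))"

end

locale M3E = M3 +
  fixes z0 z1 z2 w0 w1 w2 l :: real
  assumes zpos: "z0 > 0" "z1 > 0" "z2 > 0"
    and wpos: "w0 > 0" "w1 > 0" "w2 > 0"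
    and ev: "q00 * z0 + q01 * z1 + q02 * z2 = l * z0" "q10 * z0 + q11 * z1 + q12 * z2 = l * z1"
            "q20 * z0 + q21 * z1 + q22 * z2 = l * z2"
    and lev: "w0 * q00 + w1 * q10 + w2 * q20 = l * w0" "w0 * q01 + w1 * q11 + w2 * q21 = l * w1"
            "w0 * q02 + w1 * q12 + w2 * q22 = l * w2"
    and wz: "w0 * z0 + w1 * z1 + w2 * z2 = 1"
begin

lemma quad_u:
  "w0 * u0 * (q00 * z0 * u0 + q01 * z1 * u1 + q02 * z2 * u2)
   + w1 * u1 * (q10 * z0 * u0 + q11 * z1 * u1 + q12 * z2 * u2)
   + w2 * u2 * (q20 * z0 * u0 + q21 * z1 * u1 + q22 * z2 * u2)
   \<le> l * (w0 * z0 * u0^2 + w1 * z1 * u1^2 + w2 * z2 * u2^2)"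
proof -
  have id: "l * (w0 * z0 * u0^2 + w1 * z1 * u1^2 + w2 * z2 * u2^2) -
   (w0 * u0 * (q00 * z0 * u0 + q01 * z1 * u1 + q02 * z2 * u2)
   + w1 * u1 * (q10 * z0 * u0 + q11 * z1 * u1 + q12 * z2 * u2)
   + w2 * u2 * (q20 * z0 * u0 + q21 * z1 * u1 + q22 * z2 * u2))
   = (w0 * q01 * z1 * (u0-u1)^2 + w0 * q02 * z2 * (u0-u2)^2 + w1 * q10 * z0 * (u1-u0)^2
      + w1 * q12 * z2 * (u1-u2)^2 + w2 * q20 * z0 * (u2-u0)^2 + w2 * q21 * z1 * (u2-u1)^2) / 2"
    using ev lev by algebra
  have "0 \<le> (w0 * q01 * z1 * (u0-u1)^2 + w0 * q02 * z2 * (u0-u2)^2 + w1 * q10 * z0 * (u1-u0)^2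
      + w1 * q12 * z2 * (u1-u2)^2 + w2 * q20 * z0 * (u2-u0)^2 + w2 * q21 * z1 * (u2-u1)^2) / 2"
    using offpos zpos wpos by (intro divide_nonneg_pos add_nonneg_nonneg mult_nonneg_nonneg) auto
  with id show ?thesis by linarith
qed


definition mm :: "real \<Rightarrow> real \<Rightarrow> real \<Rightarrow> real" where
  "mm x0 x1 x2 = w0 * x0 + w1 * x1 + w2 * x2"

definition WW :: "real \<Rightarrow> real \<Rightarrow> real \<Rightarrow> real" where
  "WW x0 x1 x2 = w0 / z0 * (x0 - z0 * mm x0 x1 x2)^2 + w1 / z1 * (x1 - z1 * mm x0 x1 x2)^2
     + w2 / z2 * (x2 - z2 * mm x0 x1 x2)^2"

definition DG :: "real \<Rightarrow> real \<Rightarrow> real \<Rightarrow> real \<Rightarrow> real" where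
  "DG C x0 x1 x2 = (let m = mm x0 x1 x2; mF = w0 * F0 x0 x1 x2 + w1 * F1 x0 x1 x2 + w2 * F2 x0 x1 x2 in
     2 * (w0 / z0 * (x0 - z0 * m) * (F0 x0 x1 x2 - z0 * mF) + w1 / z1 * (x1 - z1 * m) * (F1 x0 x1 x2 - z1 * mF)
        + w2 / z2 * (x2 - z2 * m) * (F2 x0 x1 x2 - z2 * mF)) - C * (2 * m * mF))"

lemma WW_nonneg: "WW x0 x1 x2 \<ge> 0"
  unfolding WW_def using zpos wpos by (intro add_nonneg_nonneg mult_nonneg_nonneg) auto

lemma Gineq: "DG C x0 x1 x2 \<le> (2 * l - 2 * SS x0 x1 x2) * (WW x0 x1 x2 - C * (mm x0 x1 x2)^2)"
proof -
  define m where "m = mm x0 x1 x2"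
  define S where "S = SS x0 x1 x2"
  define e0 where "e0 = x0 - z0 * m"
  define e1 where "e1 = x1 - z1 * m"
  define e2 where "e2 = x2 - z2 * m"
  define u0 where "u0 = e0 / z0"
  define u1 where "u1 = e1 / z1"
  define u2 where "u2 = e2 / z2"
  have E: "e0 = z0 * u0" "e1 = z1 * u1" "e2 = z2 * u2" using zpos by (auto simp: u0_def u1_def u2_def)
  have W: "WW x0 x1 x2 = w0 * z0 * u0^2 + w1 * z1 * u1^2 + w2 * z2 * u2^2"
    unfolding WW_def m_def[symmetric] e0_def[symmetric] e1_def[symmetric] e2_def[symmetric] E
    using zpos by (simp add: power2_eq_square)
  have x: "x0 = z0 * u0 + z0 * m" "x1 = z1 * u1 + z1 * m" "x2 = z2 * u2 + z2 * m"
    using E by (auto simp: e0_def e1_def e2_def)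
  have mdef: "m = w0 * x0 + w1 * x1 + w2 * x2" by (simp add: m_def mm_def)
  have Sdef: "S = (q00 + q10 + q20) * x0 + (q01 + q11 + q21) * x1 + (q02 + q12 + q22) * x2"
    by (simp add: S_def SS_def)
  have D: "DG C x0 x1 x2 = (let mF = w0 * (q00 * x0 + q01 * x1 + q02 * x2 - x0 * S)
         + w1 * (q10 * x0 + q11 * x1 + q12 * x2 - x1 * S) + w2 * (q20 * x0 + q21 * x1 + q22 * x2 - x2 * S) in
     2 * (w0 * u0 * ((q00 * x0 + q01 * x1 + q02 * x2 - x0 * S) - z0 * mF)
        + w1 * u1 * ((q10 * x0 + q11 * x1 + q12 * x2 - x1 * S) - z1 * mF)
        + w2 * u2 * ((q20 * x0 + q21 * x1 + q22 * x2 - x2 * S) - z2 * mF)) - C * (2 * m * mF))"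
    unfolding DG_def m_def[symmetric] S_def[symmetric] F0_def F1_def F2_def Let_def
      e0_def[symmetric] e1_def[symmetric] e2_def[symmetric] E
    using zpos by simp
  have key: "DG C x0 x1 x2 = 2 * (w0 * u0 * (q00 * z0 * u0 + q01 * z1 * u1 + q02 * z2 * u2)
   + w1 * u1 * (q10 * z0 * u0 + q11 * z1 * u1 + q12 * z2 * u2)
   + w2 * u2 * (q20 * z0 * u0 + q21 * z1 * u1 + q22 * z2 * u2))
   - 2 * S * (w0 * z0 * u0^2 + w1 * z1 * u1^2 + w2 * z2 * u2^2) - 2 * C * m^2 * (l - S)"
    unfolding D Let_def using ev lev wz x mdef by algebra
  define Q where "Q = w0 * u0 * (q00 * z0 * u0 + q01 * z1 * u1 + q02 * z2 * u2)
   + w1 * u1 * (q10 * z0 * u0 + q11 * z1 * u1 + q12 * z2 * u2)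
   + w2 * u2 * (q20 * z0 * u0 + q21 * z1 * u1 + q22 * z2 * u2)"
  define V where "V = w0 * z0 * u0^2 + w1 * z1 * u1^2 + w2 * z2 * u2^2"
  have "Q \<le> l * V" using quad_u[of u0 u1 u2] by (simp add: Q_def V_def)
  moreover have "DG C x0 x1 x2 = 2 * Q - 2 * S * V - 2 * C * m^2 * (l - S)"
    using key by (simp add: Q_def V_def)
  moreover have "(2 * l - 2 * SS x0 x1 x2) * (WW x0 x1 x2 - C * (mm x0 x1 x2)^2) = (2 * l - 2 * S) * (V - C * m^2)"
    using W by (simp add: V_def m_def S_def)
  moreover have "(2 * l - 2 * S) * (V - C * m^2) - (2 * Q - 2 * S * V - 2 * C * m^2 * (l - S)) = 2 * (l * V - Q)"
    by (simp add: algebra_simps)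
  ultimately show ?thesis by (metis aux_le)
qed


lemma trajectory_bound:
  assumes sol: "is_solution FF x" and x0s: "x 0 \<in> simplex3" and T: "T \<ge> 0"
  shows "fst (x T) + fst (snd (x T)) + snd (snd (x T)) = 1
    \<and> WW (fst (x T)) (fst (snd (x T))) (snd (snd (x T)))
       \<le> (WW (fst (x 0)) (fst (snd (x 0))) (snd (snd (x 0))) / (mm (fst (x 0)) (fst (snd (x 0))) (snd (snd (x 0))))^2)
          * (mm (fst (x T)) (fst (snd (x T))) (snd (snd (x T))))^2"
proof -
  define X0 where "X0 = (\<lambda>s. fst (x s))"
  define X1 where "X1 = (\<lambda>s. fst (snd (x s)))"
  define X2 where "X2 = (\<lambda>s. snd (snd (x s)))"
  define C where "C = WW (X0 0) (X1 0) (X2 0) / (mm (X0 0) (X1 0) (X2 0))^2"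
  have dx: "(x has_vector_derivative FF (x s)) (at s within {0..T})" if "s \<in> {0..T}" for s
    using sol that unfolding is_solution_def by (auto intro: has_vector_derivative_within_subset)
  have d0: "(X0 has_real_derivative F0 (X0 s) (X1 s) (X2 s)) (at s within {0..T})" if "s \<in> {0..T}" for s
    using bounded_linear.has_vector_derivative[OF bounded_linear_fst dx[OF that]]
    unfolding has_real_derivative_iff_has_vector_derivative X0_def X1_def X2_def FF_def by simp
  have d1: "(X1 has_real_derivative F1 (X0 s) (X1 s) (X2 s)) (at s within {0..T})" if "s \<in> {0..T}" for s
    using bounded_linear.has_vector_derivative[OF bounded_linear_fst
       bounded_linear.has_vector_derivative[OF bounded_linear_snd dx[OF that]]]
    unfolding has_real_derivative_iff_has_vector_derivative X0_def X1_def X2_def FF_def by simp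
  have d2: "(X2 has_real_derivative F2 (X0 s) (X1 s) (X2 s)) (at s within {0..T})" if "s \<in> {0..T}" for s
    using bounded_linear.has_vector_derivative[OF bounded_linear_snd
       bounded_linear.has_vector_derivative[OF bounded_linear_snd dx[OF that]]]
    unfolding has_real_derivative_iff_has_vector_derivative X0_def X1_def X2_def FF_def by simp
  have c0: "continuous_on {0..T} X0" by (rule DERIV_continuous_on[OF d0])
  have c1: "continuous_on {0..T} X1" by (rule DERIV_continuous_on[OF d1])
  have c2: "continuous_on {0..T} X2" by (rule DERIV_continuous_on[OF d2])
  define Sf where "Sf = (\<lambda>s. SS (X0 s) (X1 s) (X2 s))"
  have cS: "continuous_on {0..T} Sf"
    unfolding Sf_def SS_def by (intro continuous_intros c0 c1 c2)
  define B where "B = (\<lambda>s. integral {0..s} Sf)"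
  have dB: "(B has_real_derivative Sf s) (at s within {0..T})" if "s \<in> {0..T}" for s
    unfolding B_def by (rule integral_has_real_derivative[OF cS that])
  define E where "E = (\<lambda>s. (1 - (X0 s + X1 s + X2 s)) * exp (B s))"
  have dE: "(E has_real_derivative 0) (at s within {0..T})" if s: "s \<in> {0..T}" for s
  proof -
    have dd: "(E has_real_derivative
        (- (F0 (X0 s) (X1 s) (X2 s) + F1 (X0 s) (X1 s) (X2 s) + F2 (X0 s) (X1 s) (X2 s))) * exp (B s)
        + (1 - (X0 s + X1 s + X2 s)) * (exp (B s) * Sf s)) (at s within {0..T})"
      unfolding E_def by (rule derivative_eq_intros d0 d1 d2 dB s refl | simp)+
    have eq: "F0 (X0 s) (X1 s) (X2 s) + F1 (X0 s) (X1 s) (X2 s) + F2 (X0 s) (X1 s) (X2 s)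
        = Sf s * (1 - (X0 s + X1 s + X2 s))"
      unfolding F0_def F1_def F2_def Sf_def SS_def by (simp add: algebra_simps)
    have z: "(- (F0 (X0 s) (X1 s) (X2 s) + F1 (X0 s) (X1 s) (X2 s) + F2 (X0 s) (X1 s) (X2 s))) * exp (B s)
        + (1 - (X0 s + X1 s + X2 s)) * (exp (B s) * Sf s) = 0"
      unfolding eq by (simp add: algebra_simps)
    from dd show ?thesis unfolding z .
  qed
  obtain c where "\<forall>s\<in>{0..T}. E s = c"
    using has_field_derivative_zero_constant[of "{0..T}" E] dE by auto
  then have "E T = E 0" using T by auto
  moreover have "X0 0 + X1 0 + X2 0 = 1" using x0s by (auto simp: X0_def X1_def X2_def simplex3_def)
  ultimately have sum1: "X0 T + X1 T + X2 T = 1" by (simp add: E_def)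
  have m0: "mm (X0 0) (X1 0) (X2 0) > 0"
  proof -
    have "X0 0 \<ge> 0" "X1 0 \<ge> 0" "X2 0 \<ge> 0" "X0 0 + X1 0 + X2 0 = 1"
      using x0s by (auto simp: X0_def X1_def X2_def simplex3_def)
    then have "X0 0 > 0 \<or> X1 0 > 0 \<or> X2 0 > 0" by linarith
    moreover have "w0 * X0 0 \<ge> 0" "w1 * X1 0 \<ge> 0" "w2 * X2 0 \<ge> 0"
      using wpos \<open>X0 0 \<ge> 0\<close> \<open>X1 0 \<ge> 0\<close> \<open>X2 0 \<ge> 0\<close> by simp_all
    moreover have "X0 0 > 0 \<Longrightarrow> w0 * X0 0 > 0" "X1 0 > 0 \<Longrightarrow> w1 * X1 0 > 0" "X2 0 > 0 \<Longrightarrow> w2 * X2 0 > 0"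
      using wpos by simp_all
    ultimately show ?thesis unfolding mm_def by linarith
  qed
  define G where "G = (\<lambda>s. WW (X0 s) (X1 s) (X2 s) - C * (mm (X0 s) (X1 s) (X2 s))^2)"
  have G0: "G 0 = 0" using m0 by (simp add: G_def C_def)
  have dG: "(G has_real_derivative DG C (X0 s) (X1 s) (X2 s)) (at s within {0..T})" if s: "s \<in> {0..T}" for s
  proof -
    have "z0 \<noteq> 0" "z1 \<noteq> 0" "z2 \<noteq> 0" using zpos by auto
    then show ?thesis
      unfolding G_def WW_def mm_def
      apply -
      apply (rule derivative_eq_intros d0 d1 d2 s refl)+
      by (simp add: DG_def Let_def mm_def field_simps)
  qed
  define H where "H = (\<lambda>s. G s * exp (2 * B s - 2 * l * s))"
  have "H T \<le> H 0"
  proof (rule nonincr[OF T])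
    fix s assume s: "0 \<le> s" "s \<le> T"
    then have s': "s \<in> {0..T}" by auto
    show "(H has_real_derivative (DG C (X0 s) (X1 s) (X2 s) * exp (2 * B s - 2 * l * s)
        + G s * (exp (2 * B s - 2 * l * s) * (2 * Sf s - 2 * l)))) (at s within {0..T})"
      unfolding H_def by (rule derivative_eq_intros dG dB s' refl | simp)+
    have "DG C (X0 s) (X1 s) (X2 s) \<le> (2 * l - 2 * Sf s) * G s"
      using Gineq[of C "X0 s" "X1 s" "X2 s"] by (simp add: G_def Sf_def)
    then have "DG C (X0 s) (X1 s) (X2 s) + G s * (2 * Sf s - 2 * l) \<le> 0"
      by (simp add: algebra_simps)
    then have "(DG C (X0 s) (X1 s) (X2 s) + G s * (2 * Sf s - 2 * l)) * exp (2 * B s - 2 * l * s) \<le> 0"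
      by (simp add: mult_nonpos_nonneg)
    then show "DG C (X0 s) (X1 s) (X2 s) * exp (2 * B s - 2 * l * s)
        + G s * (exp (2 * B s - 2 * l * s) * (2 * Sf s - 2 * l)) \<le> 0"
      by (simp add: algebra_simps)
  qed
  then have "G T * exp (2 * B T - 2 * l * T) \<le> 0" using G0 by (simp add: H_def)
  then have "G T \<le> 0" by (simp add: mult_le_0_iff)
  then show ?thesis using sum1 by (simp add: G_def C_def X0_def X1_def X2_def)
qed


definition sz where "sz = z0 + z1 + z2"

lemma sz_pos: "sz > 0" using zpos by (simp add: sz_def)

lemma fix_p: "F0 (z0 / sz) (z1 / sz) (z2 / sz) = 0 \<and> F1 (z0 / sz) (z1 / sz) (z2 / sz) = 0
    \<and> F2 (z0 / sz) (z1 / sz) (z2 / sz) = 0"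
proof -
  have "SS (z0 / sz) (z1 / sz) (z2 / sz) = SS z0 z1 z2 / sz"
    unfolding SS_def by (simp add: add_divide_distrib)
  moreover have "SS z0 z1 z2 = l * sz" unfolding SS_def sz_def using ev by algebra
  ultimately have S: "SS (z0 / sz) (z1 / sz) (z2 / sz) = l" using sz_pos by simp
  have "F0 (z0 / sz) (z1 / sz) (z2 / sz) = (q00 * z0 + q01 * z1 + q02 * z2 - z0 * l) / sz"
       "F1 (z0 / sz) (z1 / sz) (z2 / sz) = (q10 * z0 + q11 * z1 + q12 * z2 - z1 * l) / sz"
       "F2 (z0 / sz) (z1 / sz) (z2 / sz) = (q20 * z0 + q21 * z1 + q22 * z2 - z2 * l) / sz"
    unfolding F0_def F1_def F2_def S by (simp_all add: add_divide_distrib diff_divide_distrib)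
  then show ?thesis using ev by (simp add: algebra_simps)
qed

lemma unique_fix:
  assumes y: "y0 > 0" "y1 > 0" "y2 > 0" "y0 + y1 + y2 = 1"
    and f: "F0 y0 y1 y2 = 0" "F1 y0 y1 y2 = 0" "F2 y0 y1 y2 = 0"
  shows "y0 = z0 / sz \<and> y1 = z1 / sz \<and> y2 = z2 / sz"
proof -
  define S where "S = SS y0 y1 y2"
  define m where "m = mm y0 y1 y2"
  have Q: "q00 * y0 + q01 * y1 + q02 * y2 = y0 * S" "q10 * y0 + q11 * y1 + q12 * y2 = y1 * S"
     "q20 * y0 + q21 * y1 + q22 * y2 = y2 * S"
    using f by (simp_all add: F0_def F1_def F2_def S_def)
  have mpos: "m > 0" using y wpos by (simp add: m_def mm_def add_pos_pos)
  have "S * m = l * m"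
    using Q lev unfolding m_def mm_def by algebra
  then have Sl: "S = l" using mpos by simp
  define u0 where "u0 = (y0 - z0 * m) / z0"
  define u1 where "u1 = (y1 - z1 * m) / z1"
  define u2 where "u2 = (y2 - z2 * m) / z2"
  have yu: "y0 = z0 * u0 + z0 * m" "y1 = z1 * u1 + z1 * m" "y2 = z2 * u2 + z2 * m"
    using zpos by (auto simp: u0_def u1_def u2_def field_simps)
  have msum: "m = w0 * y0 + w1 * y1 + w2 * y2" by (simp add: m_def mm_def)
  have sum0: "w0 * z0 * u0 + w1 * z1 * u1 + w2 * z2 * u2 = 0"
    using msum yu wz by algebra
  have Z: "w0 * q01 * z1 * (u0-u1)^2 + w0 * q02 * z2 * (u0-u2)^2 + w1 * q10 * z0 * (u1-u0)^2
      + w1 * q12 * z2 * (u1-u2)^2 + w2 * q20 * z0 * (u2-u0)^2 + w2 * q21 * z1 * (u2-u1)^2 = 0"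
    using ev lev Q yu Sl by algebra
  have nn: "0 \<le> w0 * q01 * z1 * (u0-u1)^2" "0 \<le> w0 * q02 * z2 * (u0-u2)^2" "0 \<le> w1 * q10 * z0 * (u1-u0)^2"
      "0 \<le> w1 * q12 * z2 * (u1-u2)^2" "0 \<le> w2 * q20 * z0 * (u2-u0)^2" "0 \<le> w2 * q21 * z1 * (u2-u1)^2"
    using offpos zpos wpos by (auto intro!: mult_nonneg_nonneg)
  have "w0 * q01 * z1 * (u0-u1)^2 = 0" "w0 * q02 * z2 * (u0-u2)^2 = 0"
    using Z nn by linarith+
  then have "u1 = u0" "u2 = u0" using offpos zpos wpos by auto
  then have "u0 * (w0 * z0 + w1 * z1 + w2 * z2) = 0" using sum0 by (simp add: algebra_simps)
  then have "u0 = 0" using wz by simp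
  then have yz: "y0 = z0 * m" "y1 = z1 * m" "y2 = z2 * m" using yu \<open>u1 = u0\<close> \<open>u2 = u0\<close> by auto
  then have "m * sz = 1" using y(4) by (simp add: sz_def algebra_simps)
  then have "m = 1 / sz" using sz_pos by (simp add: field_simps)
  then show ?thesis using yz by simp
qed

lemma dist3: "dist (a, b, c) (a', b', c') \<le> \<bar>a - a'\<bar> + \<bar>b - b'\<bar> + \<bar>c - c'\<bar>"
proof -
  have h1: "dist (a, b, c) (a', b', c') \<le> \<bar>dist a a'\<bar> + \<bar>dist (b, c) (b', c')\<bar>"
    unfolding dist_Pair_Pair[of a "(b,c)"] by (rule sqrt_sum_squares_le_sum_abs)
  have h2: "dist (b, c) (b', c') \<le> \<bar>dist b b'\<bar> + \<bar>dist c c'\<bar>"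
    unfolding dist_Pair_Pair by (rule sqrt_sum_squares_le_sum_abs)
  have "\<bar>dist (b, c) (b', c')\<bar> = dist (b, c) (b', c')" by simp
  with h1 h2 show ?thesis by (simp add: dist_real_def)
qed

definition kap where "kap = 1 + z0 / w0 + z1 / w1 + z2 / w2"

lemma close:
  assumes sum1: "y0 + y1 + y2 = 1" and W: "WW y0 y1 y2 \<le> C * (mm y0 y1 y2)^2"
    and C: "0 \<le> C" "kap * C < \<rho>^2" and \<rho>: "0 < \<rho>" "\<rho> \<le> sz / 6"
  shows "dist (y0, y1, y2) (z0 / sz, z1 / sz, z2 / sz) \<le> 24 * \<rho> / sz"
proof -
  define m where "m = mm y0 y1 y2"
  define e0 where "e0 = y0 - z0 * m"
  define e1 where "e1 = y1 - z1 * m"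
  define e2 where "e2 = y2 - z2 * m"
  have Wd: "WW y0 y1 y2 = w0 / z0 * e0^2 + w1 / z1 * e1^2 + w2 / z2 * e2^2"
    by (simp add: WW_def e0_def e1_def e2_def m_def)
  have t: "0 \<le> w0 / z0 * e0^2" "0 \<le> w1 / z1 * e1^2" "0 \<le> w2 / z2 * e2^2"
    using zpos wpos by auto
  have kap: "z0 / w0 \<le> kap" "z1 / w1 \<le> kap" "z2 / w2 \<le> kap" "0 \<le> kap"
    using zpos wpos by (auto simp: kap_def)
  have Wn: "0 \<le> WW y0 y1 y2" by (rule WW_nonneg)
  have bound: "e^2 \<le> (\<rho> * m)^2" if "w / z * e^2 \<le> WW y0 y1 y2" "z / w \<le> kap" "z > 0" "w > 0" for e z w
  proof -
    have "e^2 = (z / w) * (w / z * e^2)" using that by (simp add: field_simps)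
    also have "\<dots> \<le> (z / w) * WW y0 y1 y2" using that by (intro mult_left_mono) auto
    also have "\<dots> \<le> kap * WW y0 y1 y2" using that Wn by (intro mult_right_mono) auto
    also have "\<dots> \<le> kap * (C * m^2)" using W kap(4) by (intro mult_left_mono) (auto simp: m_def)
    also have "\<dots> = (kap * C) * m^2" by simp
    also have "\<dots> \<le> \<rho>^2 * m^2" using C by (intro mult_right_mono) auto
    finally show ?thesis by (simp add: power_mult_distrib)
  qed
  have "\<bar>e0\<bar> \<le> \<rho> * \<bar>m\<bar>" using bound[where e=e0 and z=z0 and w=w0] Wd t zpos wpos kap \<rho>
    by (simp add: abs_le_square_iff[symmetric] abs_mult)
  moreover have "\<bar>e1\<bar> \<le> \<rho> * \<bar>m\<bar>" using bound[where e=e1 and z=z1 and w=w1] Wd t zpos wpos kap \<rho>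
    by (simp add: abs_le_square_iff[symmetric] abs_mult)
  moreover have "\<bar>e2\<bar> \<le> \<rho> * \<bar>m\<bar>" using bound[where e=e2 and z=z2 and w=w2] Wd t zpos wpos kap \<rho>
    by (simp add: abs_le_square_iff[symmetric] abs_mult)
  ultimately have eb: "\<bar>e0\<bar> \<le> \<rho> * \<bar>m\<bar>" "\<bar>e1\<bar> \<le> \<rho> * \<bar>m\<bar>" "\<bar>e2\<bar> \<le> \<rho> * \<bar>m\<bar>" by auto
  have es: "e0 + e1 + e2 = 1 - sz * m" using sum1 by (simp add: e0_def e1_def e2_def sz_def algebra_simps)
  have rm: "\<rho> * \<bar>m\<bar> \<le> sz / 6 * \<bar>m\<bar>" using \<rho> by (intro mult_right_mono) auto
  have mpos: "m > 0"
  proof (rule ccontr)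
    assume "\<not> m > 0"
    then have "\<bar>m\<bar> = - m" by simp
    then have "1 - sz * m = 1 + sz * \<bar>m\<bar>" by simp
    moreover have "sz * \<bar>m\<bar> \<ge> 0" using sz_pos by simp
    ultimately show False using es eb rm by linarith
  qed
  then have am: "\<bar>m\<bar> = m" by simp
  have szm: "sz * m \<le> 2" using es eb rm am by (simp add: algebra_simps)
  have mle: "m \<le> 2 / sz" using szm sz_pos by (simp add: field_simps)
  have diff: "\<bar>sz * m - 1\<bar> \<le> 3 * \<rho> * m" using es eb am by linarith
  have comp: "\<bar>y - z / sz\<bar> \<le> 8 * \<rho> / sz"
    if ey: "y = e + z * m" and ee: "\<bar>e\<bar> \<le> \<rho> * m" and z: "0 < z" "z \<le> sz" for y e z
  proof -
    have "y - z / sz = e + (z / sz) * (sz * m - 1)" using ey sz_pos by (simp add: field_simps)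
    moreover have "\<bar>e + (z / sz) * (sz * m - 1)\<bar> \<le> \<bar>e\<bar> + \<bar>(z / sz) * (sz * m - 1)\<bar>"
      by (rule abs_triangle_ineq)
    moreover have "\<bar>(z / sz) * (sz * m - 1)\<bar> = (z / sz) * \<bar>sz * m - 1\<bar>"
      using z sz_pos by (simp add: abs_mult)
    ultimately have "\<bar>y - z / sz\<bar> \<le> \<bar>e\<bar> + (z / sz) * \<bar>sz * m - 1\<bar>" by simp
    also have "\<dots> \<le> \<rho> * m + 1 * (3 * \<rho> * m)"
      using ee diff z sz_pos by (intro add_mono mult_mono) auto
    also have "\<dots> = 4 * (\<rho> * m)" by simp
    also have "\<dots> \<le> 4 * (\<rho> * (2 / sz))" using mle \<rho> by (intro mult_left_mono) auto
    finally show ?thesis by simp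
  qed
  have zle: "z0 \<le> sz" "z1 \<le> sz" "z2 \<le> sz" using zpos by (auto simp: sz_def)
  have "\<bar>y0 - z0 / sz\<bar> \<le> 8 * \<rho> / sz" by (rule comp[of _ e0]) (use eb am zpos zle in \<open>auto simp: e0_def\<close>)
  moreover have "\<bar>y1 - z1 / sz\<bar> \<le> 8 * \<rho> / sz" by (rule comp[of _ e1]) (use eb am zpos zle in \<open>auto simp: e1_def\<close>)
  moreover have "\<bar>y2 - z2 / sz\<bar> \<le> 8 * \<rho> / sz" by (rule comp[of _ e2]) (use eb am zpos zle in \<open>auto simp: e2_def\<close>)
  ultimately show ?thesis using dist3[of y0 y1 y2 "z0 / sz" "z1 / sz" "z2 / sz"] by simp
qed


lemma kap_pos: "kap > 0" using zpos wpos by (simp add: kap_def add_pos_nonneg)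

lemma stable: "lyapunov_stable FF simplex3 (z0 / sz, z1 / sz, z2 / sz)"
  unfolding lyapunov_stable_def
proof (intro allI impI)
  fix \<epsilon> :: real assume \<epsilon>: "\<epsilon> > 0"
  define p where "p = (z0 / sz, z1 / sz, z2 / sz)"
  define \<rho> where "\<rho> = min (sz / 6) (\<epsilon> * sz / 48)"
  have \<rho>: "\<rho> > 0" "\<rho> \<le> sz / 6" "\<rho> \<le> \<epsilon> * sz / 48" using sz_pos \<epsilon> by (auto simp: \<rho>_def)
  have \<rho>e: "24 * \<rho> / sz < \<epsilon>"
  proof -
    have "24 * \<rho> \<le> 24 * (\<epsilon> * sz / 48)" using \<rho> by simp
    also have "\<dots> < \<epsilon> * sz" using \<epsilon> sz_pos by simp
    finally show ?thesis using sz_pos by (simp add: field_simps)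
  qed
  define \<eta> where "\<eta> = \<rho>^2 / kap"
  have \<eta>: "\<eta> > 0" using \<rho> kap_pos by (simp add: \<eta>_def)
  define f where "f = (\<lambda>x::real\<times>real\<times>real. WW (fst x) (fst (snd x)) (snd (snd x))
        / (mm (fst x) (fst (snd x)) (snd (snd x)))^2)"
  have mp: "mm (z0 / sz) (z1 / sz) (z2 / sz) = 1 / sz"
  proof -
    have "mm (z0 / sz) (z1 / sz) (z2 / sz) = (w0 * z0 + w1 * z1 + w2 * z2) / sz"
      unfolding mm_def by (simp add: add_divide_distrib)
    then show ?thesis using wz by simp
  qed
  have fp: "f p = 0" unfolding f_def p_def WW_def using mp sz_pos by simp
  have c1: "continuous (at p) (\<lambda>x::real\<times>real\<times>real. WW (fst x) (fst (snd x)) (snd (snd x)))"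
    unfolding WW_def mm_def by (intro continuous_intros)
  have c2: "continuous (at p) (\<lambda>x::real\<times>real\<times>real. (mm (fst x) (fst (snd x)) (snd (snd x)))^2)"
    unfolding mm_def by (intro continuous_intros)
  have "continuous (at p) f"
    unfolding f_def by (rule continuous_divide[OF c1 c2]) (use mp sz_pos in \<open>simp add: p_def\<close>)
  then obtain \<delta> where \<delta>: "\<delta> > 0" "\<And>x'. dist x' p < \<delta> \<Longrightarrow> dist (f x') (f p) < \<eta>"
    unfolding continuous_at_eps_delta using \<eta> by blast
  show "\<exists>\<delta>>0. \<forall>x. is_solution FF x \<and> x 0 \<in> simplex3 \<and> dist (x 0) (z0 / sz, z1 / sz, z2 / sz) < \<delta>
        \<longrightarrow> (\<forall>t\<ge>0. dist (x t) (z0 / sz, z1 / sz, z2 / sz) < \<epsilon>)"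
  proof (intro exI[of _ \<delta>] conjI allI impI \<delta>(1))
    fix x :: "real \<Rightarrow> real \<times> real \<times> real" and t :: real
    assume h: "is_solution FF x \<and> x 0 \<in> simplex3 \<and> dist (x 0) (z0 / sz, z1 / sz, z2 / sz) < \<delta>"
      and t: "t \<ge> 0"
    define C where "C = f (x 0)"
    have "dist C 0 < \<eta>" using \<delta>(2)[of "x 0"] h fp by (simp add: C_def p_def)
    moreover have C0: "C \<ge> 0" unfolding C_def f_def using WW_nonneg by simp
    ultimately have "C < \<eta>" by (simp add: dist_real_def)
    then have "kap * C < kap * \<eta>" using kap_pos by simp
    then have kC: "kap * C < \<rho>^2" using kap_pos by (simp add: \<eta>_def)
    from trajectory_bound[of x t] h t
    have tb: "fst (x t) + fst (snd (x t)) + snd (snd (x t)) = 1"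
      "WW (fst (x t)) (fst (snd (x t))) (snd (snd (x t))) \<le> C * (mm (fst (x t)) (fst (snd (x t))) (snd (snd (x t))))^2"
      by (simp_all add: C_def f_def)
    have "dist (fst (x t), fst (snd (x t)), snd (snd (x t))) (z0 / sz, z1 / sz, z2 / sz) \<le> 24 * \<rho> / sz"
      by (rule close[OF tb C0 kC \<rho>(1,2)])
    then show "dist (x t) (z0 / sz, z1 / sz, z2 / sz) < \<epsilon>" using \<rho>e by simp
  qed
qed

lemma main_E: "\<exists>p. (p \<in> simplex3 \<and> fst p > 0 \<and> fst (snd p) > 0 \<and> snd (snd p) > 0 \<and> FF p = 0)
    \<and> (\<forall>q. q \<in> simplex3 \<and> fst q > 0 \<and> fst (snd q) > 0 \<and> snd (snd q) > 0 \<and> FF q = 0 \<longrightarrow> q = p)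
    \<and> lyapunov_stable FF simplex3 p"
proof (intro exI[of _ "(z0 / sz, z1 / sz, z2 / sz)"] conjI allI impI stable)
  show "(z0 / sz, z1 / sz, z2 / sz) \<in> simplex3"
    using zpos sz_pos by (simp add: simplex3_def add_divide_distrib[symmetric] sz_def)
  show "0 < fst (z0 / sz, z1 / sz, z2 / sz)" "0 < fst (snd (z0 / sz, z1 / sz, z2 / sz))"
    "0 < snd (snd (z0 / sz, z1 / sz, z2 / sz))" using zpos sz_pos by simp_all
  show "FF (z0 / sz, z1 / sz, z2 / sz) = 0" using fix_p by (simp add: FF_def zero_prod_def)
next
  fix q :: "real \<times> real \<times> real"
  assume h: "q \<in> simplex3 \<and> fst q > 0 \<and> fst (snd q) > 0 \<and> snd (snd q) > 0 \<and> FF q = 0"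
  obtain y0 y1 y2 where q: "q = (y0, y1, y2)" by (cases q) auto
  have "y0 > 0" "y1 > 0" "y2 > 0" "y0 + y1 + y2 = 1" "F0 y0 y1 y2 = 0" "F1 y0 y1 y2 = 0" "F2 y0 y1 y2 = 0"
    using h by (auto simp: q simplex3_def FF_def zero_prod_def)
  from unique_fix[OF this] show "q = (z0 / sz, z1 / sz, z2 / sz)" by (simp add: q)
qed

end

lemma (in M3) main: "\<exists>p. (p \<in> simplex3 \<and> fst p > 0 \<and> fst (snd p) > 0 \<and> snd (snd p) > 0 \<and> FF p = 0)
    \<and> (\<forall>q. q \<in> simplex3 \<and> fst q > 0 \<and> fst (snd q) > 0 \<and> snd (snd q) > 0 \<and> FF q = 0 \<longrightarrow> q = p)
    \<and> lyapunov_stable FF simplex3 p"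
proof -
  obtain z0 z1 z2 l where z: "z0 > 0" "z1 > 0" "z2 > 0"
    "q00 * z0 + q01 * z1 + q02 * z2 = l * z0" "q10 * z0 + q11 * z1 + q12 * z2 = l * z1"
    "q20 * z0 + q21 * z1 + q22 * z2 = l * z2"
    using perron3[of q01 q02 q10 q12 q20 q21 q00 q11 q22] offpos by blast
  obtain y0 y1 y2 l' where y: "y0 > 0" "y1 > 0" "y2 > 0"
    "q00 * y0 + q10 * y1 + q20 * y2 = l' * y0" "q01 * y0 + q11 * y1 + q21 * y2 = l' * y1"
    "q02 * y0 + q12 * y1 + q22 * y2 = l' * y2"
    using perron3[of q10 q20 q01 q21 q02 q12 q00 q11 q22] offpos by blast
  define N where "N = y0 * z0 + y1 * z1 + y2 * z2"
  have N: "N > 0" using y z by (simp add: N_def add_pos_pos)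
  have "l * N = l' * N" unfolding N_def using y z by algebra
  then have ll: "l' = l" using N by simp
  interpret E: M3E q00 q01 q02 q10 q11 q12 q20 q21 q22 z0 z1 z2 "y0 / N" "y1 / N" "y2 / N" l
  proof unfold_locales
    show "0 < z0" "0 < z1" "0 < z2" by (fact z)+
    show "0 < y0 / N" "0 < y1 / N" "0 < y2 / N" using y N by simp_all
    show "q00 * z0 + q01 * z1 + q02 * z2 = l * z0" "q10 * z0 + q11 * z1 + q12 * z2 = l * z1"
      "q20 * z0 + q21 * z1 + q22 * z2 = l * z2" by (fact z)+
    show "y0 / N * q00 + y1 / N * q10 + y2 / N * q20 = l * (y0 / N)"
      using y(4) ll N by (simp add: field_simps)
    show "y0 / N * q01 + y1 / N * q11 + y2 / N * q21 = l * (y1 / N)"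
      using y(5) ll N by (simp add: field_simps)
    show "y0 / N * q02 + y1 / N * q12 + y2 / N * q22 = l * (y2 / N)"
      using y(6) ll N by (simp add: field_simps)
    have "y0 / N * z0 + y1 / N * z1 + y2 / N * z2 = (y0 * z0 + y1 * z1 + y2 * z2) / N"
      by (simp add: add_divide_distrib)
    also have "\<dots> = 1" using N by (simp add: N_def[symmetric])
    finally show "y0 / N * z0 + y1 / N * z1 + y2 / N * z2 = 1" .
  qed
  show ?thesis by (rule E.main_E)
qed

theorem theorem3:
  fixes a1 a2 a3 b1 b2 b3 b4 g1 g2 g3 g4 :: real
  assumes "a1 > 0" "a2 > 0" "a3 > 0" "b1 > 0" "b2 > 0" "b3 > 0" "b4 > 0"
    "g1 > 0" "g2 > 0" "g3 > 0" "g4 > 0"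
  shows "\<exists>p. (p \<in> simplex3 \<and> fst p > 0 \<and> fst (snd p) > 0 \<and> snd (snd p) > 0
               \<and> rev_rhs a1 a2 a3 b1 b2 b3 b4 g1 g2 g3 g4 p = 0)
          \<and> (\<forall>q. q \<in> simplex3 \<and> fst q > 0 \<and> fst (snd q) > 0 \<and> snd (snd q) > 0
               \<and> rev_rhs a1 a2 a3 b1 b2 b3 b4 g1 g2 g3 g4 q = 0 \<longrightarrow> q = p)
          \<and> lyapunov_stable (rev_rhs a1 a2 a3 b1 b2 b3 b4 g1 g2 g3 g4) simplex3 p"
proof -
  interpret M: M3 a1 b2 g2 a2 "b1 - b2 - b3 - b4" g3 a3 b3 "g1 - g2 - g3 - g4"
    by unfold_locales (use assms in auto)
  have eq: "rev_rhs a1 a2 a3 b1 b2 b3 b4 g1 g2 g3 g4 = M.FF"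
  proof
    fix x :: "real \<times> real \<times> real"
    obtain x0 x1 x2 where x: "x = (x0, x1, x2)" by (cases x) auto
    show "rev_rhs a1 a2 a3 b1 b2 b3 b4 g1 g2 g3 g4 x = M.FF x"
      unfolding x rev_rhs_def M.FF_def M.F0_def M.F1_def M.F2_def M.SS_def Let_def
      by (simp add: algebra_simps)
  qed
  show ?thesis unfolding eq by (rule M.main)
qed

end
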